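(* Let $n>5$ be prime and let $\gamma$ be a probability distribution on $\mathbb{Z}_n$ with $\gamma(k)\in\mathbb{Q}$ for all $k$. Suppose $\hat{\gamma}(x)=\hat{\gamma}(y)$ for some $x,y\in\mathbb{Z}_n\setminus\{0\}$. Then $\gamma(kx^{-1}y)=\gamma(k)$ for all $k\in\mathbb{Z}_n$, where all operations are in the field $\mathbb{Z}_n$.
   Context: $\hat{\gamma}(x)=\sum_{k\in\mathbb{Z}_n}\omega_n^{kx}\gamma(k)$ with $\omega_n=e^{-2\pi i/n}$. *)

theory Defs
  imports "HOL-Analysis.Analysis" "HOL-Number_Theory.Number_Theory"
begin

(* Z_n is represented by {0..<n} with arithmetic mod n. *)

definition omega :: "nat \<Rightarrow> complex" where
  "omega n = cis (- 2 * pi / real n)"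

definition fourier :: "nat \<Rightarrow> (nat \<Rightarrow> real) \<Rightarrow> nat \<Rightarrow> complex" where
  "fourier n \<gamma> x = (\<Sum>k<n. omega n ^ (k * x) * complex_of_real (\<gamma> k))"

definition zn_inv :: "nat \<Rightarrow> nat \<Rightarrow> nat" where
  "zn_inv n x = (THE x'. x' < n \<and> (x * x') mod n = 1)"

definition is_prob_dist :: "nat \<Rightarrow> (nat \<Rightarrow> real) \<Rightarrow> bool" where
  "is_prob_dist n \<gamma> \<longleftrightarrow> (\<forall>k<n. \<gamma> k \<ge> 0) \<and> (\<Sum>k<n. \<gamma> k) = 1"

end

theory Submission imports Defs "Berlekamp_Zassenhaus.Factor_Bound" begin
lemma eis_aux:
  fixes F G H :: "int poly" and p :: int
  assumes pr: "prime p" and FGH: "F = G * H"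
   and low: "\<forall>j<degree F. p dvd Polynomial.coeff F j"
   and lc: "\<not> p dvd lead_coeff F" and c0: "\<not> p^2 dvd Polynomial.coeff F 0"
  shows "degree G = 0 \<or> degree H = 0"
proof (rule ccontr)
  assume nz: "\<not> (degree G = 0 \<or> degree H = 0)"
  have F0: "F \<noteq> 0" using lc by auto
  hence G0: "G \<noteq> 0" and H0: "H \<noteq> 0" using FGH by auto
  have lcm: "lead_coeff F = lead_coeff G * lead_coeff H" using FGH lead_coeff_mult by blast
  have lG: "\<not> p dvd lead_coeff G" using lc unfolding lcm using dvd_mult2 by blast
  have lH: "\<not> p dvd lead_coeff H" using lc unfolding lcm using dvd_mult by blast
  obtain i where i1: "\<not> p dvd Polynomial.coeff G i" and i2: "\<forall>a<i. p dvd Polynomial.coeff G a"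
    using exists_least_iff[of "\<lambda>i. \<not> p dvd Polynomial.coeff G i"] lG by blast
  obtain j where j1: "\<not> p dvd Polynomial.coeff H j" and j2: "\<forall>a<j. p dvd Polynomial.coeff H a"
    using exists_least_iff[of "\<lambda>i. \<not> p dvd Polynomial.coeff H i"] lH by blast
  have "Polynomial.coeff G i \<noteq> 0" using i1 by (metis dvd_0_right)
  hence iG: "i \<le> degree G" by (rule le_degree)
  have "Polynomial.coeff H j \<noteq> 0" using j1 by (metis dvd_0_right)
  hence jH: "j \<le> degree H" by (rule le_degree)
  have dF: "degree F = degree G + degree H" using FGH degree_mult_eq G0 H0 by blast
  have cF: "Polynomial.coeff F (i+j) = Polynomial.coeff G i * Polynomial.coeff H j
     + (\<Sum>a\<in>{..i+j}-{i}. Polynomial.coeff G a * Polynomial.coeff H (i+j-a))"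
    unfolding FGH coeff_mult by (subst sum.remove[of _ i]) auto
  have "p dvd (\<Sum>a\<in>{..i+j}-{i}. Polynomial.coeff G a * Polynomial.coeff H (i+j-a))"
  proof (rule dvd_sum)
    fix a assume "a \<in> {..i+j}-{i}"
    hence "a < i \<or> (a > i \<and> i+j-a < j)" by auto
    thus "p dvd Polynomial.coeff G a * Polynomial.coeff H (i+j-a)"
    proof
      assume "a < i" thus ?thesis using i2 dvd_mult2 by blast
    next
      assume "a > i \<and> i+j-a < j" thus ?thesis using j2 dvd_mult by blast
    qed
  qed
  moreover have "\<not> p dvd Polynomial.coeff G i * Polynomial.coeff H j"
    using pr i1 j1 prime_dvd_mult_iff by blast
  ultimately have "\<not> p dvd Polynomial.coeff F (i+j)" unfolding cF
    using dvd_add_left_iff by blast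
  hence "\<not> i + j < degree F" using low by blast
  hence ii: "i = degree G" and jj: "j = degree H" using iG jH dF by auto
  have "p dvd Polynomial.coeff G 0" using i2 ii nz by auto
  moreover have "p dvd Polynomial.coeff H 0" using j2 jj nz by auto
  ultimately have "p^2 dvd Polynomial.coeff G 0 * Polynomial.coeff H 0"
    by (simp add: power2_eq_square mult_dvd_mono)
  thus False using c0 unfolding FGH coeff_mult_0 by blast
qed

definition cyc :: "nat \<Rightarrow> int poly" where
  "cyc p = (\<Sum>k<p. [:0,1:]^k)"

lemma pc_pow: "(q::int poly)^k \<circ>\<^sub>p r = (q \<circ>\<^sub>p r)^k"
  by (rule pcompose_hom.hom_power)

lemma cyc_shift:
  "[:0,1:] * (cyc p \<circ>\<^sub>p [:1,1:]) = [:1,1:]^p - 1"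
proof -
  have "cyc p \<circ>\<^sub>p [:1,1:] = (\<Sum>k<p. [:1,1:]^k)"
    unfolding cyc_def pcompose_sum pc_pow by (simp add: pcompose_pCons)
  moreover have "([:1,1:]::int poly) - 1 = [:0,1:]" by (simp add: poly_eq_iff coeff_pCons split: nat.split)
  ultimately show ?thesis using power_diff_1_eq[of "[:1,1::int:]" p] by simp
qed

lemma cyc_shift_coeff:
  assumes "j < p"
  shows "Polynomial.coeff (cyc p \<circ>\<^sub>p [:1,1:]) j = int (p choose Suc j)"
proof -
  have "Polynomial.coeff (cyc p \<circ>\<^sub>p [:1,1:]) j = Polynomial.coeff ([:0,1:] * (cyc p \<circ>\<^sub>p [:1,1:])) (Suc j)"
    by simp
  also have "\<dots> = Polynomial.coeff ([:1,1:]^p - 1) (Suc j)" by (simp only: cyc_shift)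
  also have "\<dots> = int (p choose Suc j)" using assms
    using coeff_linear_poly_power[of "Suc j" p 1 "1::int"] by simp
  finally show ?thesis .
qed

lemma degree_cyc_shift:
  assumes "p \<ge> 1"
  shows "degree (cyc p \<circ>\<^sub>p [:1,1:]) = p - 1"
proof -
  have dl: "degree (([:1,1:]::int poly)^p) = p" by (rule degree_linear_power)
  have "degree (([:1,1:]::int poly)^p + (-1)) = p"
    using degree_add_eq_left[of "-1" "([:1,1:]::int poly)^p"] assms dl by simp
  hence d: "degree (([:1,1:]::int poly)^p - 1) = p" by simp
  have nz: "cyc p \<circ>\<^sub>p [:1,1:] \<noteq> 0"
  proof
    assume "cyc p \<circ>\<^sub>p [:1,1:] = 0"
    hence "([:1,1:]::int poly)^p - 1 = 0" using cyc_shift[of p] by simp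
    thus False using d assms by simp
  qed
  have "degree ([:0,1:] * (cyc p \<circ>\<^sub>p [:1,1:])) = p"
    unfolding cyc_shift using d .
  thus ?thesis using nz by (subst (asm) degree_mult_eq) auto
qed

lemma cyc_irred:
  assumes pr: "prime p" and fac: "cyc p = G * H"
  shows "degree G = 0 \<or> degree H = 0"
proof -
  have p1: "p \<ge> 1" using pr prime_ge_1_nat by blast
  have p2: "p \<ge> 2" using pr prime_ge_2_nat by blast
  let ?F = "cyc p \<circ>\<^sub>p [:1,1:]"
  have F: "?F = (G \<circ>\<^sub>p [:1,1:]) * (H \<circ>\<^sub>p [:1,1:])" unfolding fac by (rule pcompose_mult)
  have dF: "degree ?F = p - 1" using degree_cyc_shift p1 .
  have pri: "prime (int p)" using pr by simp
  have low: "\<forall>j<degree ?F. int p dvd Polynomial.coeff ?F j"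
  proof (intro allI impI)
    fix j assume j: "j < degree ?F"
    hence "Suc j < p" using dF by simp
    hence "p dvd p choose Suc j" using dvd_choose_prime pr by simp
    thus "int p dvd Polynomial.coeff ?F j" using cyc_shift_coeff[of j p] j dF
      by (simp add: int_dvd_int_iff)
  qed
  have "lead_coeff ?F = 1" using dF cyc_shift_coeff[of "p-1" p] p1 by simp
  hence lc: "\<not> int p dvd lead_coeff ?F" using p2 by simp
  have "Polynomial.coeff ?F 0 = int p" using cyc_shift_coeff[of 0 p] p1 by simp
  hence c0: "\<not> (int p)^2 dvd Polynomial.coeff ?F 0"
  proof -
    have "\<not> p^2 dvd p"
    proof
      assume "p^2 dvd p"
      hence "p * p \<le> p * 1" using p1 dvd_imp_le[of "p^2" p] by (simp add: power2_eq_square)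
      hence "p \<le> 1" using p1 by (subst (asm) mult_le_cancel1) simp
      thus False using p2 by simp
    qed
    thus ?thesis using \<open>Polynomial.coeff ?F 0 = int p\<close> by (metis Power.of_nat_power int_dvd_int_iff)
  qed
  from eis_aux[OF pri F low lc c0] show ?thesis by (simp add: degree_pcompose)
qed

lemma degree_cyc: assumes "p \<ge> 1" shows "degree (cyc p) = p - 1"
  using degree_cyc_shift[OF assms] by (simp add: degree_pcompose)

lemma poly_cyc: "poly (of_int_poly (cyc p)) (z::complex) = (\<Sum>k<p. z^k)"
  by (simp add: cyc_def hom_distribs poly_sum)

lemma map_of_rat_mult: "map_poly (of_rat :: rat \<Rightarrow> complex) (p*q) = map_poly of_rat p * map_poly of_rat q"
proof -
  interpret h: map_poly_comm_semiring_hom "of_rat :: rat \<Rightarrow> complex" by unfold_locales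
  show ?thesis by (rule h.hom_mult)
qed

lemma no_small_root:
  fixes f :: "rat poly" and z :: complex
  assumes pr: "prime p" and z: "(\<Sum>k<p. z^k) = 0"
    and f0: "f \<noteq> 0" and df: "degree f < p - 1"
  shows "poly (map_poly of_rat f) z \<noteq> 0"
proof
  assume fz: "poly (map_poly of_rat f) z = 0"
  have p1: "p \<ge> 1" using pr prime_ge_1_nat by blast
  define P :: "rat poly" where "P = of_int_poly (cyc p)"
  have Pz: "poly (map_poly of_rat P) z = 0"
    unfolding P_def using z by (simp add: map_poly_map_poly o_def poly_cyc)
  have dP: "degree P = p - 1" unfolding P_def using degree_cyc[OF p1] by simp
  define d where "d = gcd f P"
  have "d = fst (bezout_coefficients f P) * f + snd (bezout_coefficients f P) * P"
    unfolding d_def by (rule sym[OF bezout_coefficients_fst_snd])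
  hence "poly (map_poly of_rat d) z = poly (map_poly of_rat (fst (bezout_coefficients f P))) z * poly (map_poly of_rat f) z
     + poly (map_poly of_rat (snd (bezout_coefficients f P))) z * poly (map_poly of_rat P) z"
    by (simp add: hom_distribs map_of_rat_mult)
  hence dz: "poly (map_poly of_rat d) z = 0" using fz Pz by simp
  have "d dvd P" unfolding d_def by simp
  then obtain h where Pdh: "P = d * h" by (auto elim: dvdE)
  have d0: "d \<noteq> 0" unfolding d_def using f0 by simp
  have "d dvd f" unfolding d_def by simp
  hence ddf: "degree d \<le> degree f" using f0 by (simp add: dvd_imp_degree_le)
  have dd: "degree d \<noteq> 0"
  proof
    assume "degree d = 0"
    then obtain c where "d = [:c:]" using degree_eq_zeroE by blast
    thus False using dz d0 by simp
  qed
  have P0: "P \<noteq> 0" using dP df by auto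
  hence h0: "h \<noteq> 0" using Pdh by auto
  have "degree P = degree d + degree h" using Pdh d0 h0 degree_mult_eq by blast
  hence dh: "degree h \<noteq> 0" using dP df ddf by simp
  have "map_poly rat_of_int (cyc p) = d * h" using Pdh unfolding P_def by simp
  from rat_to_int_factor[OF this] obtain g' h' where "cyc p = g' * h'" "degree g' = degree d" "degree h' = degree h"
    by blast
  thus False using cyc_irred[OF pr] dd dh by metis
qed

lemma of_rat_complex: "(of_rat r :: complex) = complex_of_real (real_of_rat r)"
  by (cases r) (simp add: of_rat_rat)

lemma zn_inv_prop:
  assumes pr: "prime n" and x: "x \<in> {1..<n}"
  shows "zn_inv n x < n \<and> (x * zn_inv n x) mod n = 1"
proof -
  have "\<not> n dvd x" using x by (auto dest: dvd_imp_le)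
  note cop0 = prime_imp_coprime[OF pr this]
  have cop: "algebraic_semidom_class.coprime x n" using cop0 by (simp add: ac_simps)
  obtain u where u: "[x * u = Suc 0] (mod n)" using cong_solve_coprime_nat[OF cop] by blast
  have n1: "n > 1" using pr prime_gt_1_nat by blast
  have "(x * u) mod n = 1" using u n1 unfolding cong_def by simp
  hence "(x * (u mod n)) mod n = 1" by (simp only: mod_mult_right_eq)
  hence ex: "u mod n < n \<and> (x * (u mod n)) mod n = 1" using n1 by simp
  have uq: "\<And>v. v < n \<and> (x * v) mod n = 1 \<Longrightarrow> v = u mod n"
  proof -
    fix v assume v: "v < n \<and> (x * v) mod n = 1"
    hence "[x * v = x * (u mod n)] (mod n)" using ex unfolding cong_def by simp
    hence "[v = u mod n] (mod n)" using cong_mult_lcancel_nat[OF cop] by blast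
    thus "v = u mod n" using v ex unfolding cong_def by simp
  qed
  have "zn_inv n x = u mod n" unfolding zn_inv_def
    by (rule the_equality) (use ex uq in blast)+
  thus ?thesis using ex by simp
qed


lemma omega_pow_n: assumes "n > 0" shows "omega n ^ n = 1"
proof -
  have "omega n ^ n = cis (real n * (- 2 * pi / real n))" unfolding omega_def by (rule Complex.DeMoivre)
  also have "real n * (- 2 * pi / real n) = - (2 * pi)" using assms by simp
  also have "cis (- (2 * pi)) = 1" by (simp add: complex_eq_iff)
  finally show ?thesis .
qed

lemma omega_ne_1: assumes "n > 1" shows "omega n \<noteq> 1"
proof
  assume h: "omega n = 1"
  have "Re (omega n) = cos (2 * pi / real n)" unfolding omega_def by simp
  moreover have "cos (2 * pi / real n) < cos 0"
  proof (rule cos_monotone_0_pi)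
    show "0 < 2 * pi / real n" using assms by simp
    have "2 \<le> real n" using assms by simp
    hence "2 * pi / real n \<le> 2 * pi / 2" using pi_gt_zero by (intro divide_left_mono) auto
    thus "2 * pi / real n \<le> pi" by simp
  qed simp
  ultimately show False using h by simp
qed

lemma omega_sum: assumes "n > 1" shows "(\<Sum>k<n. omega n ^ k) = 0"
proof -
  have "omega n ^ n - 1 = (omega n - 1) * (\<Sum>k<n. omega n ^ k)" by (rule power_diff_1_eq)
  hence "(omega n - 1) * (\<Sum>k<n. omega n ^ k) = 0" using omega_pow_n[of n] assms by simp
  thus ?thesis using omega_ne_1[OF assms] by simp
qed

lemma omega_pow_mod: assumes "n > 0" shows "omega n ^ m = omega n ^ (m mod n)"
proof -
  have "omega n ^ m = omega n ^ (n * (m div n) + m mod n)" by simp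
  also have "\<dots> = (omega n ^ n) ^ (m div n) * omega n ^ (m mod n)" by (simp only: power_add power_mult)
  also have "\<dots> = omega n ^ (m mod n)" using omega_pow_n[OF assms] by simp
  finally show ?thesis .
qed

lemma mod_inv_cancel:
  fixes n u v k :: nat
  assumes "(u * v) mod n = 1" "k < n"
  shows "(((k * u) mod n) * v) mod n = k"
proof -
  have "(((k * u) mod n) * v) mod n = (k * u * v) mod n" by (simp only: mod_mult_left_eq)
  also have "\<dots> = (k * ((u * v) mod n)) mod n" by (simp only: mult.assoc mod_mult_right_eq)
  also have "\<dots> = k" using assms by simp
  finally show ?thesis .
qed

lemma sum_perm:
  fixes g :: "nat \<Rightarrow> 'a::comm_monoid_add"
  assumes n: "n > 0" and uv: "(u * v) mod n = 1"
  shows "(\<Sum>k<n. g ((k * u) mod n)) = (\<Sum>j<n. g j)"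
proof -
  have vu: "(v * u) mod n = 1" using uv by (simp add: mult.commute)
  show ?thesis
    by (rule sum.reindex_bij_witness[where i = "\<lambda>j. (j * v) mod n" and j = "\<lambda>k. (k * u) mod n"])
       (use n mod_inv_cancel[OF uv] mod_inv_cancel[OF vu] in auto)
qed

lemma four_reindex:
  assumes n: "n > 0" and uv: "(u * ui) mod n = 1"
  shows "fourier n \<gamma> u = (\<Sum>j<n. omega n ^ j * complex_of_real (\<gamma> ((j * ui) mod n)))"
proof -
  have "fourier n \<gamma> u = (\<Sum>k<n. omega n ^ ((k * u) mod n) * complex_of_real (\<gamma> ((((k * u) mod n) * ui) mod n)))"
    unfolding fourier_def
  proof (rule sum.cong[OF refl])
    fix k assume "k \<in> {..<n}"
    thus "omega n ^ (k * u) * complex_of_real (\<gamma> k) =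
      omega n ^ ((k * u) mod n) * complex_of_real (\<gamma> ((((k * u) mod n) * ui) mod n))"
      using mod_inv_cancel[OF uv, of k] omega_pow_mod[OF n, of "k*u"] by simp
  qed
  also have "\<dots> = (\<Sum>j<n. omega n ^ j * complex_of_real (\<gamma> ((j * ui) mod n)))"
    by (rule sum_perm[OF n uv, where g = "\<lambda>j. omega n ^ j * complex_of_real (\<gamma> ((j * ui) mod n))"])
  finally show ?thesis .
qed


theorem lemma1:
  fixes n :: nat and \<gamma> :: "nat \<Rightarrow> real" and x y :: nat
  assumes "prime n" and "n > 5"
    and "is_prob_dist n \<gamma>"
    and "\<forall>k<n. \<gamma> k \<in> \<rat>"
    and "x \<in> {1..<n}" and "y \<in> {1..<n}"
    and "fourier n \<gamma> x = fourier n \<gamma> y"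
  shows "\<forall>k<n. \<gamma> ((k * zn_inv n x * y) mod n) = \<gamma> k"
proof -
  note pr = assms(1)
  have n1: "n > 1" using assms(2) by simp
  have n0: "n > 0" using n1 by simp
  define \<zeta> where "\<zeta> = omega n"
  define xi where "xi = zn_inv n x"
  define yi where "yi = zn_inv n y"
  have xi: "xi < n" "(x * xi) mod n = 1" using zn_inv_prop[OF pr assms(5)] unfolding xi_def by auto
  have yi: "yi < n" "(y * yi) mod n = 1" using zn_inv_prop[OF pr assms(6)] unfolding yi_def by auto
  have xi': "(xi * x) mod n = 1" using xi by (simp add: mult.commute)
  have yi': "(yi * y) mod n = 1" using yi by (simp add: mult.commute)
  define q where "q k = (SOME r. \<gamma> k = of_rat r)" for k
  have hq: "\<gamma> k = of_rat (q k)" if "k < n" for k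
  proof -
    have "\<exists>r. \<gamma> k = of_rat r" using assms(4) that by (auto simp: Rats_def)
    thus ?thesis unfolding q_def by (rule someI_ex)
  qed
  define e where "e j = q ((j * xi) mod n) - q ((j * yi) mod n)" for j
  have S0: "(\<Sum>j<n. \<zeta> ^ j * of_rat (e j)) = 0"
  proof -
    have "(\<Sum>j<n. \<zeta> ^ j * complex_of_real (\<gamma> ((j * xi) mod n))) = (\<Sum>j<n. \<zeta> ^ j * complex_of_real (\<gamma> ((j * yi) mod n)))"
      using assms(7) four_reindex[OF n0 xi(2), of \<gamma>] four_reindex[OF n0 yi(2), of \<gamma>] unfolding \<zeta>_def by simp
    hence "(\<Sum>j<n. \<zeta> ^ j * complex_of_real (\<gamma> ((j * xi) mod n)) - \<zeta> ^ j * complex_of_real (\<gamma> ((j * yi) mod n))) = 0"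
      by (simp add: sum_subtractf)
    moreover have "\<zeta> ^ j * complex_of_real (\<gamma> ((j * xi) mod n)) - \<zeta> ^ j * complex_of_real (\<gamma> ((j * yi) mod n))
        = \<zeta> ^ j * of_rat (e j)" if "j < n" for j
    proof -
      have "\<gamma> ((j * xi) mod n) = of_rat (q ((j * xi) mod n))" using hq n0 by simp
      moreover have "\<gamma> ((j * yi) mod n) = of_rat (q ((j * yi) mod n))" using hq n0 by simp
      ultimately show ?thesis unfolding e_def by (simp add: of_rat_complex of_rat_diff right_diff_distrib)
    qed
    ultimately show ?thesis by simp
  qed
  define E where "E = e (n - 1)"
  define f :: "rat poly" where "f = (\<Sum>j<n-1. Polynomial.monom (e j - E) j)"
  have cf: "Polynomial.coeff f i = (if i < n - 1 then e i - E else 0)" for i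
    unfolding f_def by (simp add: coeff_sum coeff_monom)
  have pf: "poly (map_poly of_rat f) \<zeta> = 0"
  proof -
    interpret h: map_poly_comm_semiring_hom "of_rat :: rat \<Rightarrow> complex" by unfold_locales
    have "poly (map_poly of_rat f) \<zeta> = (\<Sum>j<n-1. of_rat (e j - E) * \<zeta> ^ j)"
      unfolding f_def h.hom_sum by (simp add: poly_sum of_rat_hom.map_poly_hom_monom poly_monom)
    also have "\<dots> = (\<Sum>j<n. of_rat (e j - E) * \<zeta> ^ j)"
    proof -
      have "n = Suc (n - 1)" using n0 by simp
      hence "(\<Sum>j<n. of_rat (e j - E) * \<zeta> ^ j) = (\<Sum>j<Suc (n-1). of_rat (e j - E) * \<zeta> ^ j)" by simp
      also have "\<dots> = (\<Sum>j<n-1. of_rat (e j - E) * \<zeta> ^ j)" unfolding E_def by simp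
      finally show ?thesis by simp
    qed
    also have "\<dots> = (\<Sum>j<n. \<zeta> ^ j * of_rat (e j)) - of_rat E * (\<Sum>j<n. \<zeta> ^ j)"
      by (simp add: of_rat_diff algebra_simps sum_subtractf sum_distrib_left)
    also have "\<dots> = 0" using S0 omega_sum[OF n1] unfolding \<zeta>_def by simp
    finally show ?thesis .
  qed
  have f0: "f = 0"
  proof (rule ccontr)
    assume fn: "f \<noteq> 0"
    have "degree f \<le> n - 2" by (rule degree_le) (use cf in auto)
    hence "degree f < n - 1" using n1 by simp
    from no_small_root[OF pr _ fn this] omega_sum[OF n1] pf show False unfolding \<zeta>_def by simp
  qed
  have eE: "e j = E" if "j < n" for j
  proof (cases "j < n - 1")
    case True
    thus ?thesis using cf[of j] f0 by simp
  next
    case False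
    hence "j = n - 1" using that by simp
    thus ?thesis unfolding E_def by simp
  qed
  have "(\<Sum>j<n. e j) = (\<Sum>j<n. q ((j * xi) mod n)) - (\<Sum>j<n. q ((j * yi) mod n))"
    unfolding e_def by (simp add: sum_subtractf)
  also have "\<dots> = 0" using sum_perm[OF n0 xi', of q] sum_perm[OF n0 yi', of q] by simp
  finally have "(\<Sum>j<n. e j) = 0" .
  moreover have "(\<Sum>j<n. e j) = of_nat n * E" using eE by simp
  ultimately have E0: "E = 0" using n0 by simp
  have key: "\<gamma> ((j * xi) mod n) = \<gamma> ((j * yi) mod n)" if "j < n" for j
    using eE[OF that] E0 hq n0 unfolding e_def by simp
  show ?thesis
  proof (intro allI impI)
    fix k assume k: "k < n"
    have "\<gamma> ((((k * y) mod n) * xi) mod n) = \<gamma> ((((k * y) mod n) * yi) mod n)"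
      using key n0 by simp
    moreover have "(((k * y) mod n) * yi) mod n = k" using mod_inv_cancel[OF yi(2) k] .
    moreover have "(((k * y) mod n) * xi) mod n = (k * zn_inv n x * y) mod n"
    proof -
      have "(((k * y) mod n) * xi) mod n = (k * y * xi) mod n" by (simp only: mod_mult_left_eq)
      also have "k * y * xi = k * zn_inv n x * y" unfolding xi_def by (simp only: mult_ac)
      finally show ?thesis .
    qed
    ultimately show "\<gamma> ((k * zn_inv n x * y) mod n) = \<gamma> k" by simp
  qed
qed

end
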